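(* Let $h_{2i}:=\frac{(-1)^{i}\cdot 2^{2i+1}\cdot(2^{2i-1}-1)\cdot B_i}{(2i)!}$ and $h_{2i-1}:=0$ for $i\geq1$, and for an integer partition $\lambda$ define $$h_{\lambda}=\frac{(-1)^{l(\lambda)}}{\prod_{i\geq1}m_i(\lambda)!}\sum_{\pi\in\Pi_{l(\lambda)}}\Big\{(-1)^{l(\pi)}\prod_{i=1}^{l(\pi)}\big[(|\pi_i|-1)!\cdot h_{\lambda_{\pi_i}}\big]\Big\}.$$ If $m_i(\lambda)\in\{0,1\}$ for all $i$ (i.e. the parts of $\lambda$ are mutually distinct), then the $2$-adic valuation satisfies $\nu_2(h_\lambda)\geq1$.
   Context: $B_i>0$ are the unsigned Bernoulli numbers defined by $\frac{x}{\sinh x}=1+\sum_{i\geq1}\frac{(-1)^i(2^{2i}-2)B_i}{(2i)!}x^{2i}$. For a nonzero integer $k$, $\nu_2(k)$ is the largest $t\ge0$ with $2^t\mid k$, $\nu_2(0)=\infty$, and for rationals $\nu_2(k_1/k_2)=\nu_2(k_1)-\nu_2(k_2)$. For a partition $\lambda$: $l(\lambda)$ length, $m_i(\lambda)$ the number of parts equal to $i$. $\Pi_n$ is the set of set partitions of $\{1,\ldots,n\}$; for $\pi=\{\pi_1,\ldots,\pi_{l(\pi)}\}\in\Pi_{l(\lambda)}$, $l(\pi)$ is its number of blocks, $|\pi_i|$ block size, $\lambda_{\pi_i}:=\sum_{j\in\pi_i}\lambda_j$. *)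

theory Defs
  imports "HOL-Computational_Algebra.Computational_Algebra" "HOL-Library.Disjoint_Sets"
    "HOL-Library.Extended_Real"
begin

definition x_over_sinh :: "rat fps" where
  "x_over_sinh = fps_X / (fps_const (1/2) * (fps_exp 1 - fps_exp (-1)))"

text \<open>Unsigned Bernoulli numbers B_i (i >= 1), defined by
  x/sinh x = 1 + sum_{i>=1} (-1)^i (2^(2i)-2) B_i / (2i)! x^(2i).\<close>
definition bernU :: "nat \<Rightarrow> rat" where
  "bernU i = fps_nth x_over_sinh (2*i) * fact (2*i) / ((-1)^i * (2^(2*i) - 2))"

text \<open>h_n: h_{2i} as given, h_{2i-1} = 0 (i >= 1); h_0 is never used (set to 0).\<close>
definition hcoef :: "nat \<Rightarrow> rat" where
  "hcoef n = (if n = 0 \<or> odd n then 0 else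
     (let i = n div 2 in
       (-1)^i * 2^(2*i+1) * (2^(2*i-1) - 1) * bernU i / fact (2*i)))"

text \<open>h_lambda for a partition lambda given as a list of its parts (positions 0..l-1).\<close>
definition hpart :: "nat list \<Rightarrow> rat" where
  "hpart lam = (-1)^(length lam) / (\<Prod>i\<in>set lam. fact (count (mset lam) i)) *
     (\<Sum>P\<in>{P. partition_on {0..<length lam} P}.
        (-1)^(card P) * (\<Prod>b\<in>P. fact (card b - 1) * hcoef (\<Sum>j\<in>b. lam ! j)))"

definition nu2 :: "rat \<Rightarrow> ereal" where
  "nu2 q = (if q = 0 then \<infinity> else
     (case quotient_of q of (a, b) \<Rightarrow>
        ereal (of_int (int (multiplicity (2::int) a) - int (multiplicity (2::int) b)))))"

end

theory Submission
  imports Defs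
begin

definition S0 :: "rat fps" where
  "S0 = Abs_fps (\<lambda>n. if even n then 1 / fact (n+1) else 0)"

lemma sinh_eq: "fps_const (1/2) * (fps_exp 1 - fps_exp (-1)) = fps_X * S0"
proof (rule fps_ext)
  fix n
  show "(fps_const (1/2) * (fps_exp 1 - fps_exp (-1::rat))) $ n = (fps_X * S0) $ n"
  proof (cases n)
    case 0 then show ?thesis by (simp add: S0_def)
  next
    case (Suc m)
    have p: "(fact m::rat) + fact m * of_nat m > 0" by (simp add: add_pos_nonneg)
    then have "(fact m::rat) * 2 + fact m * (of_nat m * 2) = 2 * (fact m + fact m * of_nat m)"
      by (simp add: algebra_simps)
    with p Suc show ?thesis
      by (cases "even m") (auto simp: S0_def field_simps)
  qed
qed

lemma xs_S0: "x_over_sinh * S0 = 1"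
proof -
  have S00: "S0 $ 0 = 1" by (simp add: S0_def)
  have "x_over_sinh = (fps_X * 1) / (fps_X * S0)"
    by (simp add: x_over_sinh_def sinh_eq)
  also have "\<dots> = 1 / S0" by (rule div_mult_mult1) simp
  also have "\<dots> = inverse S0" using S00 by (simp add: fps_divide_unit)
  finally show ?thesis using S00 inverse_mult_eq_1[of S0] by simp
qed

definition Z2 :: "rat \<Rightarrow> bool" where
  "Z2 q \<longleftrightarrow> (\<exists>a b::int. odd b \<and> q = of_int a / of_int b)"

definition E2 :: "rat \<Rightarrow> bool" where
  "E2 q \<longleftrightarrow> Z2 (q/2)"

lemma Z2_int: "Z2 (of_int a)"
  unfolding Z2_def by (rule exI[of _ a], rule exI[of _ 1]) simp

lemma Z2_nat: "Z2 (of_nat a)"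
  using Z2_int[of "int a"] by simp

lemma Z2_add: assumes "Z2 x" "Z2 y" shows "Z2 (x + y)"
proof -
  obtain a b c d :: int where h: "odd b" "x = of_int a / of_int b" "odd d" "y = of_int c / of_int d"
    using assms unfolding Z2_def by blast
  have "b \<noteq> 0" "d \<noteq> 0" using h by auto
  then have "x + y = of_int (a*d + c*b) / of_int (b*d)" using h by (simp add: field_simps)
  moreover have "odd (b*d)" using h by simp
  ultimately show ?thesis unfolding Z2_def by blast
qed

lemma Z2_mult: assumes "Z2 x" "Z2 y" shows "Z2 (x * y)"
proof -
  obtain a b c d :: int where h: "odd b" "x = of_int a / of_int b" "odd d" "y = of_int c / of_int d"
    using assms unfolding Z2_def by blast
  have "x * y = of_int (a*c) / of_int (b*d)" using h by simp
  moreover have "odd (b*d)" using h by simp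
  ultimately show ?thesis unfolding Z2_def by blast
qed

lemma Z2_div_odd: assumes "Z2 x" "odd b" shows "Z2 (x / of_int b)"
proof -
  obtain a c :: int where h: "odd c" "x = of_int a / of_int c"
    using assms unfolding Z2_def by blast
  have "x / of_int b = of_int a / of_int (c*b)" using h by simp
  moreover have "odd (c*b)" using h assms by simp
  ultimately show ?thesis unfolding Z2_def by blast
qed

lemma Z2_uminus: "Z2 x \<Longrightarrow> Z2 (- x)"
  using Z2_mult[OF Z2_int[of "-1"]] by simp

lemma E2_Z2: "E2 x \<Longrightarrow> Z2 x"
  unfolding E2_def using Z2_mult[OF Z2_int[of 2], of "x/2"] by simp

lemma E2_twice: "Z2 x \<Longrightarrow> E2 (2 * x)"
  unfolding E2_def by simp

lemma E2_add: "E2 x \<Longrightarrow> E2 y \<Longrightarrow> E2 (x + y)"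
  unfolding E2_def using Z2_add[of "x/2" "y/2"] by (simp add: add_divide_distrib)

lemma E2_mult: "E2 x \<Longrightarrow> Z2 y \<Longrightarrow> E2 (x * y)"
  unfolding E2_def using Z2_mult[of "x/2" y] by simp

lemma E2_uminus: "E2 x \<Longrightarrow> E2 (- x)"
  unfolding E2_def using Z2_uminus[of "x/2"] by simp

lemma E2_zero: "E2 0"
  unfolding E2_def using Z2_int[of 0] by simp

lemma E2_div_odd: "E2 x \<Longrightarrow> odd b \<Longrightarrow> E2 (x / of_int b)"
  unfolding E2_def using Z2_div_odd[of "x/2" b] by (simp add: mult.commute)

lemma E2_sum: "(\<And>i. i \<in> A \<Longrightarrow> E2 (f i)) \<Longrightarrow> E2 (sum f A)"
proof (induction A rule: infinite_finite_induct)
  case (infinite A) then show ?case by (simp add: E2_zero)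
next
  case empty then show ?case by (simp add: E2_zero)
next
  case (insert x F) then show ?case by (simp add: E2_add)
qed

lemma E2_prod: "finite A \<Longrightarrow> A \<noteq> {} \<Longrightarrow> (\<And>i. i \<in> A \<Longrightarrow> E2 (f i)) \<Longrightarrow> E2 (prod f A)"
proof (induction A rule: finite_ne_induct)
  case (singleton x) then show ?case by simp
next
  case (insert x F) then show ?case by (simp add: E2_mult E2_Z2)
qed


lemma fact_double_nat: "fact (2*m) = (2::nat)^m * fact m * (\<Prod>k<m. 2*k+1)"
proof (induction m)
  case 0 then show ?case by simp
next
  case (Suc m)
  have e: "2 * Suc m = Suc (Suc (2*m))" by simp
  show ?case unfolding e fact_Suc using Suc by (simp add: algebra_simps)
qed

lemma odd_prod_odd: "odd (\<Prod>k<m. 2*k+1::nat)"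
  by (induction m) auto

lemma E2_pow_fact: "n \<ge> 1 \<Longrightarrow> E2 (2^n / fact n)"
proof (induction n rule: less_induct)
  case (less n)
  show ?case
  proof (cases "n = 1")
    case True then show ?thesis using E2_twice[OF Z2_int[of 1]] by simp
  next
    case False
    have "m \<ge> 1 \<and> (n = 2*m \<or> n = 2*m+1)" if "m = n div 2" for m
      using that False less.prems by presburger
    then obtain m where m: "m \<ge> 1" "n = 2*m \<or> n = 2*m+1" by blast
    define op where "op = (\<Prod>k<m. 2*k+1::nat)"
    have opodd: "odd (int op)" unfolding op_def even_of_nat using odd_prod_odd[of m] .
    have IH: "E2 (2^m / fact m)" using less.IH[of m] m by auto
    have fd: "(fact (2*m) :: rat) = 2^m * fact m * of_int (int op)"
      unfolding op_def by (metis (mono_tags, lifting) fact_double_nat of_int_of_nat_eq of_nat_fact of_nat_mult of_nat_numeral of_nat_power)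
    have ev: "E2 (2^(2*m) / fact (2*m))"
    proof -
      have "(2::rat)^(2*m) / fact (2*m) = (2^m / fact m) / of_int (int op)"
        unfolding fd by (simp add: power_mult_distrib mult_2 power_add)
      then show ?thesis using E2_div_odd[OF IH opodd] by simp
    qed
    show ?thesis
    proof (cases "n = 2*m")
      case True then show ?thesis using ev by simp
    next
      case False
      then have n: "n = 2*m+1" using m by auto
      have "(2::rat)^n / fact n = (2^(2*m) / fact (2*m) * 2) / of_int (2*int m+1)"
        unfolding n by (simp add: field_simps)
      moreover have "E2 (2^(2*m) / fact (2*m) * 2 / of_int (2*int m+1))"
      proof -
        have "E2 (2^(2*m) / fact (2*m) * rat_of_int 2)" by (rule E2_mult[OF ev Z2_int])
        then have "E2 (2^(2*m) / fact (2*m) * rat_of_int 2 / rat_of_int (2*int m+1))"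
          by (rule E2_div_odd) simp
        then show ?thesis by simp
      qed
      ultimately show ?thesis by simp
    qed
  qed
qed


lemma E2_S0: assumes "k \<ge> 1" shows "E2 (2^k * S0 $ k)"
proof (cases "even k")
  case False then show ?thesis by (simp add: S0_def E2_zero)
next
  case True
  have "(2::rat)^k * S0 $ k = 2^k / fact k / of_int (int k + 1)"
    using True by (simp add: S0_def field_simps)
  moreover have "E2 (2^k / fact k / of_int (int k + 1))"
    by (rule E2_div_odd[OF E2_pow_fact[OF assms]]) (use True in simp)
  ultimately show ?thesis by simp
qed

lemma coeff_rec: "Z2 (2^n * x_over_sinh $ n) \<and> (n > 0 \<longrightarrow> E2 (2^n * x_over_sinh $ n))"
proof (induction n rule: less_induct)
  case (less n)
  let ?C = x_over_sinh
  show ?case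
  proof (cases "n = 0")
    case True
    have "(?C * S0) $ 0 = 1" using xs_S0 by simp
    then have "?C $ 0 = 1" by (simp add: S0_def)
    then show ?thesis using True Z2_int[of 1] by simp
  next
    case False
    have "(?C * S0) $ n = 0" using xs_S0 False by simp
    then have "(\<Sum>i=0..n. ?C$i * S0$(n - i)) = 0" by (simp add: fps_mult_nth)
    moreover have "{0..n} = insert n {0..<n}" by auto
    ultimately have "?C $ n * S0 $ 0 + (\<Sum>i<n. ?C$i * S0$(n - i)) = 0"
      by (simp add: atLeast0LessThan)
    then have eq: "?C $ n = - (\<Sum>i<n. ?C$i * S0$(n - i))" by (simp add: S0_def)
    have "(\<Sum>i<n. (2^i * ?C$i) * (2^(n-i) * S0$(n - i))) = (\<Sum>i<n. (2::rat)^n * (?C$i * S0$(n - i)))"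
    proof (rule sum.cong)
      fix i assume "i \<in> {..<n}"
      then have "(2::rat)^n = 2^i * 2^(n-i)" by (simp add: power_add[symmetric])
      then show "2^i * ?C$i * (2^(n-i) * S0$(n - i)) = (2::rat)^n * (?C$i * S0$(n - i))"
        by simp
    qed simp
    then have "(2::rat)^n * ?C $ n = - (\<Sum>i<n. (2^i * ?C$i) * (2^(n-i) * S0$(n - i)))"
      unfolding eq by (simp add: sum_distrib_left)
    moreover have "E2 (- (\<Sum>i<n. (2^i * ?C$i) * (2^(n-i) * S0$(n - i))))"
    proof (rule E2_uminus, rule E2_sum)
      fix i assume "i \<in> {..<n}"
      then have "E2 (2^(n-i) * S0$(n - i))" "Z2 (2^i * ?C$i)" using less.IH[of i] E2_S0[of "n-i"] by auto
      then have "E2 ((2^(n-i) * S0$(n - i)) * (2^i * ?C$i))" by (rule E2_mult)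
      then show "E2 ((2^i * ?C$i) * (2^(n-i) * S0$(n - i)))" by (simp only: mult.commute)
    qed
    ultimately show ?thesis using E2_Z2 by simp
  qed
qed

lemma E2_hcoef: "E2 (hcoef n)"
proof (cases "n = 0 \<or> odd n")
  case True then show ?thesis by (simp add: hcoef_def E2_zero)
next
  case False
  then obtain i where i: "n = 2*i" "i \<ge> 1" by (metis evenE less_one mult_0_right not_le)
  have ne: "(2::rat)^(2*i) - 2 \<noteq> 0"
  proof -
    have "(2::rat)^(2*i) \<ge> 2^2" using i by (intro power_increasing) auto
    then show ?thesis by simp
  qed
  have two: "(2::rat) * (2^(2*i-1) - 1) = 2^(2*i) - 2"
  proof -
    have "(2::rat) * 2^(2*i-1) = 2^(2*i)" using i by (metis Suc_diff_1 le_zero_eq not_gr_zero power_Suc mult_is_0 one_neq_zero zero_neq_numeral)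
    then show ?thesis by (simp add: algebra_simps)
  qed
  have "hcoef n = 2^(2*i) * x_over_sinh $ (2*i)"
  proof -
    have "hcoef n = (-1)^i * 2^(2*i+1) * (2^(2*i-1) - 1) * bernU i / fact (2*i)"
      using False i by (simp add: hcoef_def)
    also have "\<dots> = (-1)^i * 2^(2*i) * (2^(2*i) - 2) * bernU i / fact (2*i)"
      using two by (simp add: power_add mult.assoc[symmetric])
    also have "\<dots> = 2^(2*i) * x_over_sinh $ (2*i)"
      using ne by (simp add: bernU_def field_simps)
    finally show ?thesis .
  qed
  then show ?thesis using coeff_rec[of "2*i"] i by simp
qed


lemma E2_nu2: assumes "E2 q" shows "nu2 q \<ge> 1"
proof (cases "q = 0")
  case True then show ?thesis by (simp add: nu2_def)
next
  case False
  obtain a b :: int where ab: "odd b" "q / 2 = of_int a / of_int b"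
    using assms unfolding E2_def Z2_def by blast
  have b0: "b \<noteq> 0" using ab by auto
  obtain p r where pr: "quotient_of q = (p, r)" by (cases "quotient_of q")
  have r0: "r > 0" using quotient_of_denom_pos[OF pr] .
  have cop: "coprime p r" using quotient_of_coprime[OF pr] .
  have qpr: "q = of_int p / of_int r" using quotient_of_div[OF pr] .
  have "q = 2 * (q / 2)" by simp
  also have "\<dots> = of_int (2*a) / of_int b" using ab(2) by simp
  finally have "of_int p / of_int r = (of_int (2*a) / of_int b :: rat)" using qpr by simp
  then have "(of_int (p * b) :: rat) = of_int (2*a*r)" using b0 r0 by (simp add: field_simps)
  then have eq: "p * b = 2*a*r" by (simp only: of_int_eq_iff)
  have p0: "p \<noteq> 0" using False qpr by auto
  have "even (p * b)" unfolding eq by simp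
  then have pev: "even p" using ab(1) by simp
  have rodd: "odd r"
  proof
    assume "even r"
    with pev have "2 dvd gcd p r" by simp
    with cop show False by simp
  qed
  have m0: "multiplicity (2::int) r = 0" by (rule not_dvd_imp_multiplicity_0) (use rodd in simp)
  have m1: "multiplicity (2::int) p \<ge> 1" by (rule multiplicity_geI) (use pev p0 in auto)
  show ?thesis using False pr m0 m1 by (simp add: nu2_def)
qed

theorem lemma5p2:
  fixes lam :: "nat list"
  assumes "lam \<noteq> []"
    and "\<forall>x\<in>set lam. 0 < x"
    and "\<forall>i. count (mset lam) i \<in> {0, 1}"
  shows "nu2 (hpart lam) \<ge> 1"
proof -
  have den: "(\<Prod>i\<in>set lam. fact (count (mset lam) i) :: rat) = 1"
  proof (rule prod.neutral, intro ballI)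
    fix i assume "i \<in> set lam"
    then have "count (mset lam) i \<noteq> 0" by simp
    then have "count (mset lam) i = 1" using assms(3) by auto
    then show "(fact (count (mset lam) i) :: rat) = 1" by simp
  qed
  let ?A = "{0..<length lam}"
  have "E2 (\<Sum>P\<in>{P. partition_on ?A P}.
        (-1)^(card P) * (\<Prod>b\<in>P. fact (card b - 1) * hcoef (\<Sum>j\<in>b. lam ! j)))"
  proof (rule E2_sum)
    fix P assume "P \<in> {P. partition_on ?A P}"
    then have pP: "partition_on ?A P" by simp
    have fin: "finite P" using finite_elements[OF _ pP] by simp
    have ne: "P \<noteq> {}" using pP assms(1) unfolding partition_on_def by auto
    have "E2 (\<Prod>b\<in>P. fact (card b - 1) * hcoef (\<Sum>j\<in>b. lam ! j))"
    proof (rule E2_prod[OF fin ne])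
      fix b assume "b \<in> P"
      have "E2 (hcoef (\<Sum>j\<in>b. lam ! j) * of_nat (fact (card b - 1)))"
        by (rule E2_mult[OF E2_hcoef Z2_nat])
      then show "E2 (fact (card b - 1) * hcoef (\<Sum>j\<in>b. lam ! j))"
        by (simp add: mult.commute)
    qed
    then have "E2 ((\<Prod>b\<in>P. fact (card b - 1) * hcoef (\<Sum>j\<in>b. lam ! j)) * of_int ((-1)^card P))"
      by (rule E2_mult[OF _ Z2_int])
    then show "E2 ((-1)^(card P) * (\<Prod>b\<in>P. fact (card b - 1) * hcoef (\<Sum>j\<in>b. lam ! j)))"
      by (simp add: mult.commute)
  qed
  then have "E2 ((\<Sum>P\<in>{P. partition_on ?A P}.
        (-1)^(card P) * (\<Prod>b\<in>P. fact (card b - 1) * hcoef (\<Sum>j\<in>b. lam ! j))) * of_int ((-1)^length lam))"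
    by (rule E2_mult[OF _ Z2_int])
  then have "E2 (hpart lam)" unfolding hpart_def den by (simp add: mult.commute)
  then show ?thesis by (rule E2_nu2)
qed

end
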